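(* In the mixture setting, assume the prior is invariant under relabelling so that $\pi(P_\sigma\theta)L(P_\sigma\theta)=\pi(\theta)L(\theta)$ for all permutations $\sigma$ of $\{1,\dots,G\}$, and let $Z(G)=\int\pi(\theta)L(\theta)\,d\theta\in(0,\infty)$. Let $T$ be even and let $B\subset\mathbb{R}^R$ be a fixed measurable set (determined independently of the draws below) with $0<V(B)<\infty$ such that $\pi(\theta)L(\theta)>q$ for all $\theta\in B$, for some $q>0$. Suppose $\theta^{(T/2+1)},\dots,\theta^{(T)}$ are i.i.d. from the posterior, and let $\theta^{(t)\star}=P_{\sigma_t}(\theta^{(t)})$ be a relabelling of them. Define the symmetric THAMES $$\hat Z_{\mathrm S}^{-1}(G)=\frac{1}{G!}\sum_{\sigma}\frac{1}{T/2}\sum_{\substack{t=T/2+1\\ P_\sigma(\theta^{(t)\star})\in B}}^{T}\frac{1/V(B)}{\pi(\theta^{(t)\star})L(\theta^{(t)\star})},$$ the outer sum being over all $G!$ permutations. Then $\hat Z_{\mathrm S}^{-1}(G)=\frac{1}{T/2}\sum_{t=T/2+1}^T \frac{h(\theta^{(t)})}{\pi(\theta^{(t)})L(\theta^{(t)})}$ with the probability density $h(\theta)=\frac{1}{G!}\sum_\sigma \mathbb 1_B(P_\sigma\theta)/V(B)$, and $\hat Z_{\mathrm S}^{-1}(G)$ is an unbiased estimator of $1/Z(G)$ with finite variance, it converges almost surely to $1/Z(G)$ as $T\to\infty$, and $\sqrt{T/2}\,(\hat Z_{\mathrm S}^{-1}(G)-1/Z(G))$ converges in distribution to a centred normal 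distribution.
   Context: Mixture model: data $Y_1,\dots,Y_n$ i.i.d. with density $\sum_{g=1}^G\tau_g f(\cdot\mid\xi_g)$; parameter $\theta=(\xi_1,\dots,\xi_G,\tau_1,\dots,\tau_{G-1})\in\mathbb{R}^R$, prior density $\pi$, likelihood $L$. For a permutation $\sigma$ of $\{1,\dots,G\}$, $P_\sigma$ is the relabelling map sending $\theta$ to the parameter with components $(\xi_{\sigma(1)},\dots,\xi_{\sigma(G)})$ and proportions $(\tau_{\sigma(1)},\dots,\tau_{\sigma(G)})$, $\tau_G=1-\sum_{g<G}\tau_g$; each $P_\sigma$ is an affine bijection with Jacobian determinant $\pm1$. A relabelling of a sample means $\theta^{(t)\star}=P_{\sigma_t}(\theta^{(t)})$ for permutations $\sigma_t$ possibly depending on the sample. In the paper, $B=B_{\hat\theta,\hat\Sigma,c,\alpha}=\{\theta:(\theta-\hat\theta)^\top\hat\Sigma^{-1}(\theta-\hat\theta)<c^2,\ \pi(\theta)L(\theta)>\hat q_\alpha\}$ with $\hat\theta,\hat\Sigma$ (mean and covariance estimates) and $\hat q_\alpha>0$ computed from the first half of the sample. *)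

theory Defs
  imports "HOL-Probability.Probability"
begin

text \<open>Parameters theta in R^R, R = G*d + (G-1), represented as extensional functions on
  the index set {..<R} (0-indexed).  Coordinates g*d+j (g<G, j<d) hold xi_g, coordinates
  G*d+g (g<G-1) hold tau_g.  Components are 0-indexed: g = 0..G-1.\<close>

definition param_dim :: "nat \<Rightarrow> nat \<Rightarrow> nat" where
  "param_dim d G = G * d + (G - 1)"

definition param_space :: "nat \<Rightarrow> nat \<Rightarrow> (nat \<Rightarrow> real) measure" where
  "param_space d G = PiM {..<param_dim d G} (\<lambda>_. lborel)"

definition mix_xi :: "nat \<Rightarrow> (nat \<Rightarrow> real) \<Rightarrow> nat \<Rightarrow> (nat \<Rightarrow> real)" where
  "mix_xi d \<theta> g = (\<lambda>j. if j < d then \<theta> (g * d + j) else undefined)"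

definition mix_tau :: "nat \<Rightarrow> nat \<Rightarrow> (nat \<Rightarrow> real) \<Rightarrow> nat \<Rightarrow> real" where
  "mix_tau d G \<theta> g =
     (if g < G - 1 then \<theta> (G * d + g) else 1 - (\<Sum>h<G - 1. \<theta> (G * d + h)))"

definition relabel :: "nat \<Rightarrow> nat \<Rightarrow> (nat \<Rightarrow> nat) \<Rightarrow> (nat \<Rightarrow> real) \<Rightarrow> (nat \<Rightarrow> real)" where
  "relabel d G \<sigma> \<theta> =
     (\<lambda>i. if i < G * d then \<theta> (\<sigma> (i div d) * d + i mod d)
          else if i < G * d + (G - 1) then mix_tau d G \<theta> (\<sigma> (i - G * d))
          else undefined)"

definition mix_lik ::
  "nat \<Rightarrow> nat \<Rightarrow> ('y \<Rightarrow> (nat \<Rightarrow> real) \<Rightarrow> real) \<Rightarrow> (nat \<Rightarrow> 'y) \<Rightarrow> nat \<Rightarrow> (nat \<Rightarrow> real) \<Rightarrow> real" where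
  "mix_lik d G f Y n \<theta> = (\<Prod>i<n. \<Sum>g<G. mix_tau d G \<theta> g * f (Y i) (mix_xi d \<theta> g))"

text \<open>Symmetric THAMES for sample size T, using the relabelled draws thstar t,
  t = T/2+1..T; pL is the unnormalised posterior pi*L.\<close>
definition thames_sym ::
  "nat \<Rightarrow> nat \<Rightarrow> (nat \<Rightarrow> real) set \<Rightarrow> ((nat \<Rightarrow> real) \<Rightarrow> real) \<Rightarrow> nat \<Rightarrow> (nat \<Rightarrow> (nat \<Rightarrow> real)) \<Rightarrow> real" where
  "thames_sym d G B pL T thstar =
     (1 / fact G) * (\<Sum>\<sigma>\<in>{\<sigma>. \<sigma> permutes {..<G}}.
        (1 / (real T / 2)) *
          (\<Sum>t\<in>{t\<in>{T div 2 + 1..T}. relabel d G \<sigma> (thstar t) \<in> B}.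
             (1 / measure (param_space d G) B) / pL (thstar t)))"

definition sym_density :: "nat \<Rightarrow> nat \<Rightarrow> (nat \<Rightarrow> real) set \<Rightarrow> (nat \<Rightarrow> real) \<Rightarrow> real" where
  "sym_density d G B \<theta> =
     (1 / fact G) * (\<Sum>\<sigma>\<in>{\<sigma>. \<sigma> permutes {..<G}}.
        indicator B (relabel d G \<sigma> \<theta>) / measure (param_space d G) B)"

definition centred_normal :: "real \<Rightarrow> real measure" where
  "centred_normal s = (if s = 0 then return borel 0 else density lborel (normal_density 0 s))"

end

theory Submission
  imports Defs
begin


lemma measurable_reindex_PiM:
  assumes "\<rho> \<in> I \<rightarrow> I"
  shows "(\<lambda>\<theta>. \<lambda>i\<in>I. \<theta> (\<rho> i)) \<in> measurable (PiM I (\<lambda>_. lborel)) (PiM I (\<lambda>_. lborel :: real measure))"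
proof (intro measurable_restrict)
  fix i assume "i \<in> I"
  then have "\<rho> i \<in> I" using assms by auto
  from measurable_component_singleton[OF this, of "\<lambda>_. lborel :: real measure"]
  show "(\<lambda>x. x (\<rho> i)) \<in> measurable (PiM I (\<lambda>_. lborel)) (lborel :: real measure)" by simp
qed

lemma distr_reindex_PiM:
  fixes \<rho> :: "'i \<Rightarrow> 'i"
  assumes fin: "finite I" and bij: "bij_betw \<rho> I I"
  shows "distr (PiM I (\<lambda>_. lborel)) (PiM I (\<lambda>_. lborel)) (\<lambda>\<theta>. \<lambda>i\<in>I. \<theta> (\<rho> i)) = PiM I (\<lambda>_. lborel :: real measure)"
proof -
  interpret product_sigma_finite "\<lambda>_::'i. lborel :: real measure"
    by standard
  have rI: "\<rho> \<in> I \<rightarrow> I" using bij by (auto simp: bij_betw_def)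
  let ?r = "the_inv_into I \<rho>"
  show ?thesis
  proof (rule PiM_eqI[OF fin])
    show "sets (distr (PiM I (\<lambda>_. lborel)) (PiM I (\<lambda>_. lborel)) (\<lambda>\<theta>. \<lambda>i\<in>I. \<theta> (\<rho> i))) = sets (PiM I (\<lambda>_. lborel))"
      by simp
    fix A assume A: "\<And>i. i \<in> I \<Longrightarrow> A i \<in> sets (lborel :: real measure)"
    have pre: "(\<lambda>\<theta>. \<lambda>i\<in>I. \<theta> (\<rho> i)) -` PiE I A \<inter> space (PiM I (\<lambda>_. lborel)) = PiE I (\<lambda>j. A (?r j))"
    proof (intro set_eqI iffI)
      fix \<theta> assume "\<theta> \<in> (\<lambda>\<theta>. \<lambda>i\<in>I. \<theta> (\<rho> i)) -` PiE I A \<inter> space (PiM I (\<lambda>_. lborel))"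
      then have th: "\<theta> \<in> extensional I" "\<And>i. i \<in> I \<Longrightarrow> \<theta> (\<rho> i) \<in> A i"
        by (auto simp: space_PiM PiE_def Pi_def)
      show "\<theta> \<in> PiE I (\<lambda>j. A (?r j))"
      proof (rule PiE_I)
        fix j assume j: "j \<in> I"
        then have "?r j \<in> I" "\<rho> (?r j) = j"
          using bij by (auto simp: bij_betw_def the_inv_into_into f_the_inv_into_f)
        then show "\<theta> j \<in> A (?r j)" using th(2)[of "?r j"] by simp
      qed (use th in \<open>auto simp: extensional_def\<close>)
    next
      fix \<theta> assume th: "\<theta> \<in> PiE I (\<lambda>j. A (?r j))"
      have "\<And>i. i \<in> I \<Longrightarrow> \<theta> (\<rho> i) \<in> A i"
      proof -
        fix i assume i: "i \<in> I"
        then have "\<rho> i \<in> I" "?r (\<rho> i) = i" using bij rI by (auto simp: bij_betw_def the_inv_into_f_f)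
        then show "\<theta> (\<rho> i) \<in> A i" using th by (metis PiE_mem)
      qed
      then show "\<theta> \<in> (\<lambda>\<theta>. \<lambda>i\<in>I. \<theta> (\<rho> i)) -` PiE I A \<inter> space (PiM I (\<lambda>_. lborel))"
        using th by (auto simp: space_PiM PiE_def Pi_def extensional_def)
    qed
    have "emeasure (distr (PiM I (\<lambda>_. lborel)) (PiM I (\<lambda>_. lborel)) (\<lambda>\<theta>. \<lambda>i\<in>I. \<theta> (\<rho> i))) (PiE I A)
        = emeasure (PiM I (\<lambda>_. lborel)) (PiE I (\<lambda>j. A (?r j)))"
      using A by (subst emeasure_distr) (auto simp: pre intro!: measurable_reindex_PiM rI sets_PiM_I_finite fin)
    also have "\<dots> = (\<Prod>j\<in>I. emeasure lborel (A (?r j)))"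
    proof (rule emeasure_PiM[OF fin])
      fix j assume "j \<in> I" then have "?r j \<in> I" using bij by (auto simp: bij_betw_def the_inv_into_into)
      then show "A (?r j) \<in> sets lborel" using A by blast
    qed
    also have "\<dots> = (\<Prod>i\<in>I. emeasure lborel (A (?r (\<rho> i))))"
      using bij by (subst prod.reindex_bij_betw[symmetric, of \<rho> I I]) auto
    also have "\<dots> = (\<Prod>i\<in>I. emeasure lborel (A i))"
      using bij by (intro prod.cong) (auto simp: bij_betw_def the_inv_into_f_f)
    finally show "emeasure (distr (PiM I (\<lambda>_. lborel)) (PiM I (\<lambda>_. lborel)) (\<lambda>\<theta>. \<lambda>i\<in>I. \<theta> (\<rho> i))) (PiE I A) = (\<Prod>i\<in>I. emeasure lborel (A i))" .
  qed
qed



lemma measurable_shear_PiM: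
  fixes a :: real
  assumes fin: "finite J" and c: "c \<in> I" and J: "J \<subseteq> I"
  shows "(\<lambda>\<theta>. \<theta>(c := a - \<theta> c - (\<Sum>h\<in>J. \<theta> h))) \<in> measurable (PiM I (\<lambda>_. lborel)) (PiM I (\<lambda>_. lborel :: real measure))"
proof -
  have "(\<lambda>\<theta> i. (if i = c then a - \<theta> c - (\<Sum>h\<in>J. \<theta> h) else \<theta> i)) \<in> measurable (PiM I (\<lambda>_. lborel)) (PiM I (\<lambda>_. lborel :: real measure))"
  proof (rule measurable_PiM_single')
    fix i assume i: "i \<in> I"
    have m: "\<And>j. j \<in> I \<Longrightarrow> (\<lambda>x. x j) \<in> borel_measurable (PiM I (\<lambda>_. lborel :: real measure))"
    proof -
      fix j assume "j \<in> I"
      from measurable_component_singleton[OF this, of "\<lambda>_. lborel :: real measure"]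
      show "(\<lambda>x. x j) \<in> borel_measurable (PiM I (\<lambda>_. lborel :: real measure))" by simp
    qed
    have "(\<lambda>\<theta>. if i = c then a - \<theta> c - (\<Sum>h\<in>J. \<theta> h) else \<theta> i) \<in> borel_measurable (PiM I (\<lambda>_. lborel :: real measure))"
    proof (cases "i = c")
      case True
      have "(\<lambda>\<theta>. a - \<theta> c - (\<Sum>h\<in>J. \<theta> h)) \<in> borel_measurable (PiM I (\<lambda>_. lborel :: real measure))"
        using m c J by (intro borel_measurable_diff borel_measurable_sum borel_measurable_const) auto
      then show ?thesis using True by simp
    qed (use m i in simp)
    then show "(\<lambda>\<theta>. if i = c then a - \<theta> c - (\<Sum>h\<in>J. \<theta> h) else \<theta> i) \<in> measurable (PiM I (\<lambda>_. lborel :: real measure)) lborel"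
      by simp
  next
    show "(\<lambda>\<theta> i. (if i = c then a - \<theta> c - (\<Sum>h\<in>J. \<theta> h) else \<theta> i)) \<in> space (PiM I (\<lambda>_. lborel :: real measure)) \<rightarrow> (\<Pi>\<^sub>E i\<in>I. space lborel)"
      using c by (auto simp: space_PiM PiE_def extensional_def)
  qed
  moreover have "(\<lambda>\<theta>. \<theta>(c := a - \<theta> c - (\<Sum>h\<in>J. \<theta> h))) = (\<lambda>\<theta> i. (if i = c then a - \<theta> c - (\<Sum>h\<in>J. \<theta> h) else \<theta> i))"
    by (auto simp: fun_eq_iff)
  ultimately show ?thesis by simp
qed

lemma distr_shear_PiM:
  fixes a :: real
  assumes fin: "finite I" and c: "c \<in> I" and J: "J \<subseteq> I - {c}"
  shows "distr (PiM I (\<lambda>_. lborel)) (PiM I (\<lambda>_. lborel)) (\<lambda>\<theta>. \<theta>(c := a - \<theta> c - (\<Sum>h\<in>J. \<theta> h))) = PiM I (\<lambda>_. lborel :: real measure)"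
    (is "distr ?P ?P ?S = ?P")
proof -
  interpret product_sigma_finite "\<lambda>_. lborel :: real measure"
    by standard
  define I' where "I' = I - {c}"
  have II: "I = insert c I'" "c \<notin> I'" "finite I'" using c fin by (auto simp: I'_def)
  have finJ: "finite J" using J fin by (auto intro: finite_subset)
  have Smeas: "?S \<in> measurable ?P ?P"
    using J c finJ by (intro measurable_shear_PiM) auto
  show ?thesis
  proof (rule measure_eqI)
    show "sets (distr ?P ?P ?S) = sets ?P" by simp
    fix A assume A: "A \<in> sets (distr ?P ?P ?S)"
    then have A': "A \<in> sets ?P" by simp
    have ind: "indicator A \<in> borel_measurable ?P" using A' by simp
    have "emeasure (distr ?P ?P ?S) A = (\<integral>\<^sup>+\<theta>. indicator A \<theta> \<partial>distr ?P ?P ?S)"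
      using A by simp
    also have "\<dots> = (\<integral>\<^sup>+\<theta>. indicator A (?S \<theta>) \<partial>?P)"
      using Smeas A' by (subst nn_integral_distr) auto
    also have "\<dots> = (\<integral>\<^sup>+x. (\<integral>\<^sup>+y. indicator A (?S (x(c := y))) \<partial>lborel) \<partial>PiM I' (\<lambda>_. lborel))"
    proof -
      have "(\<lambda>\<theta>. indicator A (?S \<theta>)) \<in> borel_measurable (PiM (insert c I') (\<lambda>_. lborel :: real measure))"
        using measurable_compose[OF Smeas ind] II(1) by simp
      from product_nn_integral_insert[OF II(3) II(2) this] II(1) show ?thesis by simp
    qed
    also have "\<dots> = (\<integral>\<^sup>+x. (\<integral>\<^sup>+y. indicator A (x(c := y)) \<partial>lborel) \<partial>PiM I' (\<lambda>_. lborel))"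
    proof (rule nn_integral_cong)
      fix x assume x: "x \<in> space (PiM I' (\<lambda>_. lborel :: real measure))"
      define t where "t = a - (\<Sum>h\<in>J. x h)"
      have upd: "(\<lambda>v. x(c := v)) \<in> measurable lborel (PiM I (\<lambda>_. lborel :: real measure))"
        using measurable_component_update[OF x II(2)] II(1) by simp
      have f: "(\<lambda>y. indicator A (x(c := y)) :: ennreal) \<in> borel_measurable borel"
        using measurable_compose[OF upd ind] by simp
      have eq: "?S (x(c := y)) = x(c := t + (-1) * y)" for y
      proof -
        have "(\<Sum>h\<in>J. (x(c := y)) h) = (\<Sum>h\<in>J. x h)"
          using J by (intro sum.cong) auto
        then show ?thesis by (simp add: t_def algebra_simps)
      qed
      show "(\<integral>\<^sup>+y. indicator A (?S (x(c := y))) \<partial>lborel) = (\<integral>\<^sup>+y. indicator A (x(c := y)) \<partial>lborel)"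
        unfolding eq using nn_integral_real_affine[OF f, of "-1" t] by simp
    qed
    also have "\<dots> = (\<integral>\<^sup>+\<theta>. indicator A \<theta> \<partial>?P)"
    proof -
      have "indicator A \<in> borel_measurable (PiM (insert c I') (\<lambda>_. lborel :: real measure))"
        using ind II(1) by simp
      from product_nn_integral_insert[OF II(3) II(2) this] II(1) show ?thesis by simp
    qed
    also have "\<dots> = emeasure ?P A" using A' by simp
    finally show "emeasure (distr ?P ?P ?S) A = emeasure ?P A" .
  qed
qed



definition sig' :: "nat \<Rightarrow> (nat \<Rightarrow> nat) \<Rightarrow> nat \<Rightarrow> nat" where
  "sig' G \<sigma> j = (if \<sigma> j = G - 1 then \<sigma> (G - 1) else \<sigma> j)"

definition rho :: "nat \<Rightarrow> nat \<Rightarrow> (nat \<Rightarrow> nat) \<Rightarrow> nat \<Rightarrow> nat" where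
  "rho d G \<sigma> i = (if i < G * d then \<sigma> (i div d) * d + i mod d else G * d + sig' G \<sigma> (i - G * d))"

lemma perm_lt: assumes "\<sigma> permutes {..<G}" "j < G" shows "\<sigma> j < G"
  using permutes_in_image[OF assms(1)] assms(2) by auto

lemma sig'_bij:
  assumes p: "\<sigma> permutes {..<G}" and G: "G \<ge> 1"
  shows "bij_betw (sig' G \<sigma>) {..<G-1} {..<G-1}"
proof -
  have inj: "inj \<sigma>" using permutes_inj[OF p] .
  have img: "sig' G \<sigma> ` {..<G-1} \<subseteq> {..<G-1}"
  proof
    fix y assume "y \<in> sig' G \<sigma> ` {..<G-1}"
    then obtain j where j: "j < G - 1" "y = sig' G \<sigma> j" by auto
    show "y \<in> {..<G-1}"
    proof (cases "\<sigma> j = G - 1")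
      case True
      then have "\<sigma> (G-1) \<noteq> G - 1" using inj j by (metis inj_eq less_irrefl)
      moreover have "\<sigma> (G-1) < G" using perm_lt[OF p] G by auto
      ultimately show ?thesis using True j by (auto simp: sig'_def)
    next
      case False
      moreover have "\<sigma> j < G" using perm_lt[OF p] j by auto
      ultimately show ?thesis using j by (auto simp: sig'_def)
    qed
  qed
  have "inj_on (sig' G \<sigma>) {..<G-1}"
  proof (rule inj_onI)
    fix x y assume x: "x \<in> {..<G-1}" and y: "y \<in> {..<G-1}" and e: "sig' G \<sigma> x = sig' G \<sigma> y"
    show "x = y"
    proof (cases "\<sigma> x = G - 1"; cases "\<sigma> y = G - 1")
      assume "\<sigma> x = G - 1" "\<sigma> y = G - 1" then show ?thesis using inj by (metis inj_eq)
    next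
      assume a: "\<sigma> x = G - 1" "\<sigma> y \<noteq> G - 1"
      then have "\<sigma> (G - 1) = \<sigma> y" using e by (simp add: sig'_def)
      then have "y = G - 1" using inj by (metis inj_eq)
      then show ?thesis using y by simp
    next
      assume a: "\<sigma> x \<noteq> G - 1" "\<sigma> y = G - 1"
      then have "\<sigma> (G - 1) = \<sigma> x" using e by (simp add: sig'_def)
      then have "x = G - 1" using inj by (metis inj_eq)
      then show ?thesis using x by simp
    next
      assume a: "\<sigma> x \<noteq> G - 1" "\<sigma> y \<noteq> G - 1"
      then show ?thesis using e inj by (simp add: sig'_def inj_eq)
    qed
  qed
  with img show ?thesis unfolding bij_betw_def using endo_inj_surj[OF _ img] by simp
qed

lemma rho_bij:
  assumes p: "\<sigma> permutes {..<G}" and G: "G \<ge> 1"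
  shows "bij_betw (rho d G \<sigma>) {..<param_dim d G} {..<param_dim d G}"
proof -
  have inj: "inj \<sigma>" using permutes_inj[OF p] .
  have sb: "bij_betw (sig' G \<sigma>) {..<G-1} {..<G-1}" by (rule sig'_bij[OF p G])
  have xi_lt: "\<sigma> (i div d) * d + i mod d < G * d" if "i < G * d" for i
  proof -
    have d: "d > 0" using that by (cases d) auto
    have "i div d < G" using that d by (simp add: div_less_iff_less_mult mult.commute)
    then have "\<sigma> (i div d) < G" using perm_lt[OF p] by auto
    then have "\<sigma> (i div d) + 1 \<le> G" by simp
    then have "(\<sigma> (i div d) + 1) * d \<le> G * d" by (rule mult_right_mono) simp
    moreover have "i mod d < d" using d by simp
    ultimately show ?thesis by (simp add: algebra_simps)
  qed
  have img: "rho d G \<sigma> ` {..<param_dim d G} \<subseteq> {..<param_dim d G}"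
  proof
    fix y assume "y \<in> rho d G \<sigma> ` {..<param_dim d G}"
    then obtain i where i: "i < param_dim d G" "y = rho d G \<sigma> i" by auto
    show "y \<in> {..<param_dim d G}"
    proof (cases "i < G * d")
      case True then show ?thesis using xi_lt[OF True] i by (auto simp: rho_def param_dim_def)
    next
      case False
      then have "i - G * d < G - 1" using i by (auto simp: param_dim_def)
      then have "sig' G \<sigma> (i - G * d) < G - 1" using sb by (auto simp: bij_betw_def)
      then show ?thesis using False i by (auto simp: rho_def param_dim_def)
    qed
  qed
  have "inj_on (rho d G \<sigma>) {..<param_dim d G}"
  proof (rule inj_onI)
    fix x y assume x: "x \<in> {..<param_dim d G}" and y: "y \<in> {..<param_dim d G}" and e: "rho d G \<sigma> x = rho d G \<sigma> y"
    show "x = y"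
    proof (cases "x < G * d"; cases "y < G * d")
      assume a: "x < G * d" "y < G * d"
      then have d: "d > 0" by (cases d) auto
      have e': "\<sigma> (x div d) * d + x mod d = \<sigma> (y div d) * d + y mod d" using e a by (simp add: rho_def)
      then have "(\<sigma> (x div d) * d + x mod d) div d = (\<sigma> (y div d) * d + y mod d) div d" by simp
      then have "\<sigma> (x div d) = \<sigma> (y div d)" using d by simp
      then have 1: "x div d = y div d" using inj by (simp add: inj_eq)
      have "(\<sigma> (x div d) * d + x mod d) mod d = (\<sigma> (y div d) * d + y mod d) mod d" using e' by simp
      then have 2: "x mod d = y mod d" using d by simp
      show ?thesis using 1 2 by (metis div_mod_decomp)
    next
      assume a: "x < G * d" "\<not> y < G * d"
      then show ?thesis using e xi_lt[OF a(1)] by (simp add: rho_def)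
    next
      assume a: "\<not> x < G * d" "y < G * d"
      then show ?thesis using e xi_lt[OF a(2)] by (simp add: rho_def)
    next
      assume a: "\<not> x < G * d" "\<not> y < G * d"
      then have "sig' G \<sigma> (x - G * d) = sig' G \<sigma> (y - G * d)" using e by (simp add: rho_def)
      moreover have "x - G * d \<in> {..<G-1}" "y - G * d \<in> {..<G-1}" using a x y by (auto simp: param_dim_def)
      ultimately have "x - G * d = y - G * d" using sb by (auto simp: bij_betw_def inj_on_def)
      then show ?thesis using a by simp
    qed
  qed
  then show ?thesis unfolding bij_betw_def using endo_inj_surj[OF _ img] by simp
qed



lemma sig'_eq: assumes p: "\<sigma> permutes {..<G}" and j: "j < G - 1" and ne: "\<sigma> j \<noteq> G - 1"
  shows "sig' G \<sigma> j = \<sigma> j" "\<sigma> j < G - 1"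
proof -
  have "\<sigma> j < G" using perm_lt[OF p, of j] j by simp
  then show "sig' G \<sigma> j = \<sigma> j" "\<sigma> j < G - 1" using ne by (auto simp: sig'_def)
qed

lemma sum_sig':
  assumes p: "\<sigma> permutes {..<G}" and G: "G \<ge> 1"
  shows "(\<Sum>j<G-1. f (sig' G \<sigma> j)) = (\<Sum>j<G-1. (f j :: real))"
  using sum.reindex_bij_betw[OF sig'_bij[OF p G], of f] .

lemma relabel_case1:
  assumes p: "\<sigma> permutes {..<G}" and G: "G \<ge> 1" and fix1: "\<sigma> (G - 1) = G - 1"
    and th: "\<theta> \<in> extensional {..<param_dim d G}"
  shows "relabel d G \<sigma> \<theta> = (\<lambda>i\<in>{..<param_dim d G}. \<theta> (rho d G \<sigma> i))"
proof (rule ext)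
  fix i
  have inj: "inj \<sigma>" using permutes_inj[OF p] .
  show "relabel d G \<sigma> \<theta> i = (\<lambda>i\<in>{..<param_dim d G}. \<theta> (rho d G \<sigma> i)) i"
  proof (cases "i < G * d")
    case True then show ?thesis by (simp add: relabel_def rho_def param_dim_def)
  next
    case False
    show ?thesis
    proof (cases "i < G * d + (G - 1)")
      case True
      have ne: "\<sigma> (i - G * d) \<noteq> G - 1" using fix1 inj True False by (metis add_diff_inverse_nat inj_eq less_diff_conv2 not_le  less_irrefl)
      have "i - G * d < G - 1" using True False by simp
      note s = sig'_eq[OF p this ne]
      show ?thesis using True False s by (simp add: relabel_def rho_def param_dim_def mix_tau_def)
    next
      case F2: False
      then show ?thesis using False by (simp add: relabel_def param_dim_def)
    qed
  qed
qed

lemma relabel_case2: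
  assumes p: "\<sigma> permutes {..<G}" and G: "G \<ge> 1" and j0: "j0 < G - 1" "\<sigma> j0 = G - 1"
    and th: "\<theta> \<in> extensional {..<param_dim d G}"
  defines "r \<equiv> (\<lambda>i\<in>{..<param_dim d G}. \<theta> (rho d G \<sigma> i))"
  shows "relabel d G \<sigma> \<theta> = r(G * d + j0 := 1 - r (G * d + j0) - (\<Sum>h\<in>(\<lambda>j. G * d + j) ` ({..<G-1} - {j0}). r h))"
proof (rule ext)
  fix i
  have inj: "inj \<sigma>" using permutes_inj[OF p] .
  show "relabel d G \<sigma> \<theta> i = (r(G * d + j0 := 1 - r (G * d + j0) - (\<Sum>h\<in>(\<lambda>j. G * d + j) ` ({..<G-1} - {j0}). r h))) i"
  proof (cases "i = G * d + j0")
    case True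
    have "r (G * d + j0) + (\<Sum>h\<in>(\<lambda>j. G * d + j) ` ({..<G-1} - {j0}). r h)
        = (\<Sum>h\<in>(\<lambda>j. G * d + j) ` {..<G-1}. r h)"
    proof -
      have "(\<lambda>j. G * d + j) ` {..<G-1} = insert (G * d + j0) ((\<lambda>j. G * d + j) ` ({..<G-1} - {j0}))"
        using j0 by auto
      moreover have "G * d + j0 \<notin> (\<lambda>j. G * d + j) ` ({..<G-1} - {j0})" by auto
      ultimately show ?thesis by simp
    qed
    also have "\<dots> = (\<Sum>j<G-1. r (G * d + j))"
      by (subst sum.reindex) (auto simp: inj_on_def)
    also have "\<dots> = (\<Sum>j<G-1. \<theta> (G * d + sig' G \<sigma> j))"
      by (intro sum.cong) (auto simp: r_def rho_def param_dim_def)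
    also have "\<dots> = (\<Sum>j<G-1. \<theta> (G * d + j))"
      using sum_sig'[OF p G, of "\<lambda>j. \<theta> (G * d + j)"] .
    finally have eq: "1 - r (G * d + j0) - (\<Sum>h\<in>(\<lambda>j. G * d + j) ` ({..<G-1} - {j0}). r h) = 1 - (\<Sum>j<G-1. \<theta> (G * d + j))"
      by linarith
    have lt: "G * d + j0 < G * d + (G - 1)" using j0 by simp
    show ?thesis using True j0 eq lt by (simp add: relabel_def param_dim_def mix_tau_def)
  next
    case Fi: False
    show ?thesis
    proof (cases "i < G * d")
      case True then show ?thesis using Fi by (simp add: relabel_def rho_def param_dim_def r_def)
    next
      case False
      show ?thesis
      proof (cases "i < G * d + (G - 1)")
        case True
        have ne: "\<sigma> (i - G * d) \<noteq> G - 1" using j0 inj True False Fi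
          by (metis add_diff_inverse_nat inj_eq not_le)
        have "i - G * d < G - 1" using True False by simp
        note s = sig'_eq[OF p this ne]
        show ?thesis using True False s Fi by (simp add: relabel_def rho_def param_dim_def mix_tau_def r_def)
      next
        case F2: False
        then show ?thesis using False Fi by (simp add: relabel_def param_dim_def r_def)
      qed
    qed
  qed
qed

lemma relabel_measure_preserving:
  assumes p: "\<sigma> permutes {..<G}" and G: "G \<ge> 1"
  shows "relabel d G \<sigma> \<in> measurable (param_space d G) (param_space d G)"
    and "distr (param_space d G) (param_space d G) (relabel d G \<sigma>) = param_space d G"
proof -
  let ?P = "param_space d G"
  let ?r = "\<lambda>\<theta>. \<lambda>i\<in>{..<param_dim d G}. \<theta> (rho d G \<sigma> i)"
  have bij: "bij_betw (rho d G \<sigma>) {..<param_dim d G} {..<param_dim d G}" by (rule rho_bij[OF p G])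
  have rm: "?r \<in> measurable ?P ?P" unfolding param_space_def
    using bij by (intro measurable_reindex_PiM) (auto simp: bij_betw_def)
  have rd: "distr ?P ?P ?r = ?P" unfolding param_space_def
    using bij by (intro distr_reindex_PiM) auto
  have ext: "\<theta> \<in> space ?P \<Longrightarrow> \<theta> \<in> extensional {..<param_dim d G}" for \<theta>
    by (simp add: param_space_def space_PiM PiE_def)
  have "relabel d G \<sigma> \<in> measurable ?P ?P \<and> distr ?P ?P (relabel d G \<sigma>) = ?P"
  proof (cases "\<sigma> (G - 1) = G - 1")
    case True
    have eq: "\<theta> \<in> space ?P \<Longrightarrow> relabel d G \<sigma> \<theta> = ?r \<theta>" for \<theta>
      using relabel_case1[OF p G True ext] by simp
    have "relabel d G \<sigma> \<in> measurable ?P ?P" using rm by (subst measurable_cong[where g = ?r]) (auto simp: eq)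
    moreover have "distr ?P ?P (relabel d G \<sigma>) = distr ?P ?P ?r" by (rule distr_cong) (auto simp: eq)
    ultimately show ?thesis using rd by simp
  next
    case False
    have "\<sigma> (G - 1) < G" using perm_lt[OF p] G by simp
    have "G - 1 \<in> \<sigma> ` {..<G}" using permutes_image[OF p] G by auto
    then obtain j0 where j0': "j0 < G" "\<sigma> j0 = G - 1" by auto
    have "j0 \<noteq> G - 1" using False j0' by auto
    then have j0: "j0 < G - 1" "\<sigma> j0 = G - 1" using j0' by auto
    define J where "J = (\<lambda>j. G * d + j) ` ({..<G-1} - {j0})"
    define S where "S = (\<lambda>\<phi>::nat\<Rightarrow>real. \<phi>(G * d + j0 := 1 - \<phi> (G * d + j0) - (\<Sum>h\<in>J. \<phi> h)))"
    have c: "G * d + j0 \<in> {..<param_dim d G}" using j0 by (simp add: param_dim_def)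
    have Jsub: "J \<subseteq> {..<param_dim d G} - {G * d + j0}" by (auto simp: J_def param_dim_def)
    have Sm: "S \<in> measurable ?P ?P" unfolding param_space_def S_def
      using c Jsub by (intro measurable_shear_PiM) (auto simp: J_def)
    have Sd: "distr ?P ?P S = ?P" unfolding param_space_def S_def
      using c Jsub by (intro distr_shear_PiM) auto
    have eq: "\<theta> \<in> space ?P \<Longrightarrow> relabel d G \<sigma> \<theta> = (S \<circ> ?r) \<theta>" for \<theta>
      using relabel_case2[OF p G j0 ext] by (simp add: S_def J_def)
    have m: "S \<circ> ?r \<in> measurable ?P ?P" by (rule measurable_comp[OF rm Sm])
    have "distr ?P ?P (S \<circ> ?r) = distr (distr ?P ?P ?r) ?P S"
      using distr_distr[OF Sm rm] by simp
    also have "\<dots> = ?P" using rd Sd by simp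
    finally have dd: "distr ?P ?P (S \<circ> ?r) = ?P" .
    have "relabel d G \<sigma> \<in> measurable ?P ?P" using m by (subst measurable_cong[where g = "S \<circ> ?r"]) (auto simp: eq)
    moreover have "distr ?P ?P (relabel d G \<sigma>) = distr ?P ?P (S \<circ> ?r)" by (rule distr_cong) (auto simp: eq)
    ultimately show ?thesis using dd by simp
  qed
  then show "relabel d G \<sigma> \<in> measurable ?P ?P" "distr ?P ?P (relabel d G \<sigma>) = ?P" by auto
qed



lemma mix_tau_sum: assumes G: "G \<ge> 1" shows "(\<Sum>g<G. mix_tau d G \<theta> g) = 1"
proof -
  have "{..<G} = insert (G - 1) {..<G-1}" using G by auto
  then have "(\<Sum>g<G. mix_tau d G \<theta> g) = mix_tau d G \<theta> (G - 1) + (\<Sum>g<G-1. mix_tau d G \<theta> g)" by simp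
  also have "(\<Sum>g<G-1. mix_tau d G \<theta> g) = (\<Sum>g<G-1. \<theta> (G * d + g))"
    by (intro sum.cong) (auto simp: mix_tau_def)
  finally show ?thesis by (simp add: mix_tau_def)
qed

lemma mix_tau_relabel:
  assumes p: "\<tau> permutes {..<G}" and G: "G \<ge> 1" and g: "g < G"
  shows "mix_tau d G (relabel d G \<tau> \<theta>) g = mix_tau d G \<theta> (\<tau> g)"
proof (cases "g < G - 1")
  case True then show ?thesis by (simp add: mix_tau_def relabel_def)
next
  case False
  then have g1: "g = G - 1" using g by simp
  have "(\<Sum>h<G-1. relabel d G \<tau> \<theta> (G * d + h)) = (\<Sum>h<G-1. mix_tau d G \<theta> (\<tau> h))"
    by (intro sum.cong) (auto simp: relabel_def)
  moreover have "(\<Sum>h<G. mix_tau d G \<theta> (\<tau> h)) = 1"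
    using sum.permute[OF p, of "mix_tau d G \<theta>"] mix_tau_sum[OF G] by (simp add: o_def)
  moreover have "{..<G} = insert (G - 1) {..<G-1}" using G by auto
  ultimately show ?thesis using g1 by (simp add: mix_tau_def)
qed

lemma relabel_comp:
  assumes s: "\<sigma> permutes {..<G}" and t: "\<tau> permutes {..<G}" and G: "G \<ge> 1"
  shows "relabel d G \<sigma> (relabel d G \<tau> \<theta>) = relabel d G (\<tau> \<circ> \<sigma>) \<theta>"
proof (rule ext)
  fix i
  show "relabel d G \<sigma> (relabel d G \<tau> \<theta>) i = relabel d G (\<tau> \<circ> \<sigma>) \<theta> i"
  proof (cases "i < G * d")
    case True
    then have d: "d > 0" by (cases d) auto
    have "i div d < G" using True d by (simp add: div_less_iff_less_mult mult.commute)
    then have a: "\<sigma> (i div d) < G" using perm_lt[OF s] by auto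
    then have "\<sigma> (i div d) + 1 \<le> G" by simp
    then have "(\<sigma> (i div d) + 1) * d \<le> G * d" by (rule mult_right_mono) simp
    moreover have "i mod d < d" using d by simp
    ultimately have lt: "\<sigma> (i div d) * d + i mod d < G * d" by (simp add: algebra_simps)
    show ?thesis using True lt d by (simp add: relabel_def)
  next
    case False
    show ?thesis
    proof (cases "i < G * d + (G - 1)")
      case True
      then have "\<sigma> (i - G * d) < G" using perm_lt[OF s] False by simp
      then show ?thesis using True False mix_tau_relabel[OF t G] by (simp add: relabel_def)
    next
      case F2: False then show ?thesis using False by (simp add: relabel_def)
    qed
  qed
qed

lemma thames_identity:
  fixes pL :: "(nat \<Rightarrow> real) \<Rightarrow> real"
  assumes G: "G \<ge> 1"
    and inv: "\<And>\<sigma> \<theta>. \<sigma> permutes {..<G} \<Longrightarrow> \<theta> \<in> space (param_space d G) \<Longrightarrow> pL (relabel d G \<sigma> \<theta>) = pL \<theta>"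
    and sp: "\<And>t. \<theta>s t \<in> space (param_space d G)"
    and tp: "\<And>t. \<tau>s t permutes {..<G}"
  shows "thames_sym d G B pL T (\<lambda>t. relabel d G (\<tau>s t) (\<theta>s t))
     = (1 / (real T / 2)) * (\<Sum>t\<in>{T div 2 + 1..T}. sym_density d G B (\<theta>s t) / pL (\<theta>s t))"
proof -
  let ?P = "{\<sigma>. \<sigma> permutes {..<G}}"
  let ?T = "{T div 2 + 1..T}"
  let ?c = "1 / measure (param_space d G) B"
  have finP: "finite ?P" by (simp add: finite_permutations)
  have "thames_sym d G B pL T (\<lambda>t. relabel d G (\<tau>s t) (\<theta>s t))
      = (1 / fact G) * (\<Sum>\<sigma>\<in>?P. (1 / (real T / 2)) *
          (\<Sum>t\<in>?T. indicator B (relabel d G (\<tau>s t \<circ> \<sigma>) (\<theta>s t)) * ?c / pL (\<theta>s t)))"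
  proof -
    have inner: "(\<Sum>t\<in>{t \<in> ?T. relabel d G \<sigma> (relabel d G (\<tau>s t) (\<theta>s t)) \<in> B}. ?c / pL (relabel d G (\<tau>s t) (\<theta>s t)))
        = (\<Sum>t\<in>?T. indicator B (relabel d G (\<tau>s t \<circ> \<sigma>) (\<theta>s t)) * ?c / pL (\<theta>s t))"
      if \<sigma>: "\<sigma> \<in> ?P" for \<sigma>
      using \<sigma> by (subst sum.inter_filter) (auto simp: relabel_comp[OF _ tp G] inv[OF tp sp] intro!: sum.cong)
    show ?thesis unfolding thames_sym_def
      apply (rule arg_cong2[where f="(*)"], rule refl)
      apply (rule sum.cong[OF refl])
      apply (rule arg_cong2[where f="(*)"], rule refl)
      apply (erule inner)
      done
  qed
  also have "\<dots> = (1 / (real T / 2)) * (\<Sum>t\<in>?T. (1 / fact G) * (\<Sum>\<sigma>\<in>?P. indicator B (relabel d G (\<tau>s t \<circ> \<sigma>) (\<theta>s t)) * ?c / pL (\<theta>s t)))"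
    by (simp add: sum_distrib_left sum.swap[of _ ?P] mult_ac)
  also have "\<dots> = (1 / (real T / 2)) * (\<Sum>t\<in>?T. (1 / fact G) * (\<Sum>\<sigma>\<in>?P. indicator B (relabel d G \<sigma> (\<theta>s t)) * ?c / pL (\<theta>s t)))"
  proof -
    have "(\<Sum>\<sigma>\<in>?P. indicator B (relabel d G (\<tau>s t \<circ> \<sigma>) (\<theta>s t)) * ?c / pL (\<theta>s t))
        = (\<Sum>\<sigma>\<in>?P. indicator B (relabel d G \<sigma> (\<theta>s t)) * ?c / pL (\<theta>s t))" for t
      using setum_permutations_compose_left[OF tp, of "\<lambda>\<sigma>. indicator B (relabel d G \<sigma> (\<theta>s t)) * ?c / pL (\<theta>s t)" t, symmetric]
      by simp
    then show ?thesis by simp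
  qed
  also have "\<dots> = (1 / (real T / 2)) * (\<Sum>t\<in>?T. sym_density d G B (\<theta>s t) / pL (\<theta>s t))"
    unfolding sym_density_def by (simp add: sum_divide_distrib sum_distrib_left mult_ac)
  finally show ?thesis .
qed



lemma card_perms: "card {\<sigma>. \<sigma> permutes {..<G}} = fact G"
  using card_permutations[of "{..<G}" G] by simp

lemma sym_density_meas:
  assumes G: "G \<ge> 1" and B: "B \<in> sets (param_space d G)"
  shows "sym_density d G B \<in> borel_measurable (param_space d G)"
proof -
  have "(\<lambda>\<theta>. indicator B (relabel d G \<sigma> \<theta>) / measure (param_space d G) B :: real) \<in> borel_measurable (param_space d G)"
    if "\<sigma> permutes {..<G}" for \<sigma>
    using measurable_compose[OF relabel_measure_preserving(1)[OF that G] borel_measurable_indicator[OF B]]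
    by (intro borel_measurable_divide) auto
  then show ?thesis unfolding sym_density_def
    by (intro borel_measurable_times borel_measurable_const borel_measurable_sum) auto
qed

lemma sym_density_nonneg: "0 \<le> sym_density d G B \<theta>"
  unfolding sym_density_def by (auto intro!: sum_nonneg divide_nonneg_nonneg)

lemma sym_density_le:
  "sym_density d G B \<theta> \<le> 1 / measure (param_space d G) B"
proof -
  have "(\<Sum>\<sigma>\<in>{\<sigma>. \<sigma> permutes {..<G}}. indicator B (relabel d G \<sigma> \<theta>) / measure (param_space d G) B)
      \<le> (\<Sum>\<sigma>\<in>{\<sigma>. \<sigma> permutes {..<G}}. 1 / measure (param_space d G) B)"
    by (intro sum_mono divide_right_mono) (auto simp: indicator_def)
  also have "\<dots> = fact G * (1 / measure (param_space d G) B)" by (simp add: card_perms)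
  finally show ?thesis unfolding sym_density_def by (simp add: field_simps)
qed

lemma sym_density_pos:
  assumes "sym_density d G B \<theta> \<noteq> 0"
  shows "\<exists>\<sigma>. \<sigma> permutes {..<G} \<and> relabel d G \<sigma> \<theta> \<in> B"
proof (rule ccontr)
  assume "\<not> ?thesis"
  then have "sym_density d G B \<theta> = 0" unfolding sym_density_def by (auto intro!: sum.neutral)
  with assms show False by simp
qed

lemma sym_density_integral:
  assumes G: "G \<ge> 1" and B: "B \<in> sets (param_space d G)"
    and Bpos: "0 < emeasure (param_space d G) B" and Bfin: "emeasure (param_space d G) B < \<infinity>"
  shows "(\<integral>\<^sup>+\<theta>. ennreal (sym_density d G B \<theta>) \<partial>param_space d G) = 1"
proof -
  let ?P = "{\<sigma>. \<sigma> permutes {..<G}}"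
  let ?T = "param_space d G"
  let ?V = "measure ?T B"
  have EV: "emeasure ?T B = ennreal ?V" using Bfin by (simp add: emeasure_eq_ennreal_measure)
  have Vpos: "?V > 0" using Bpos EV by simp
  define c where "c = 1 / (fact G * ?V)"
  have c: "c \<ge> 0" using Vpos by (simp add: c_def)
  have eq: "ennreal (sym_density d G B \<theta>) = (\<Sum>\<sigma>\<in>?P. ennreal c * indicator B (relabel d G \<sigma> \<theta>))" for \<theta>
  proof -
    have "sym_density d G B \<theta> = (\<Sum>\<sigma>\<in>?P. c * indicator B (relabel d G \<sigma> \<theta>))"
      unfolding sym_density_def c_def by (simp add: sum_distrib_left field_simps)
    also have "ennreal \<dots> = (\<Sum>\<sigma>\<in>?P. ennreal (c * indicator B (relabel d G \<sigma> \<theta>)))"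
      using c by (intro sum_ennreal[symmetric]) auto
    also have "\<dots> = (\<Sum>\<sigma>\<in>?P. ennreal c * indicator B (relabel d G \<sigma> \<theta>))"
      using c by (intro sum.cong) (auto simp: ennreal_mult indicator_def)
    finally show ?thesis .
  qed
  have each: "(\<integral>\<^sup>+\<theta>. ennreal c * indicator B (relabel d G \<sigma> \<theta>) \<partial>?T) = ennreal c * ennreal ?V"
    if s: "\<sigma> permutes {..<G}" for \<sigma>
  proof -
    note rm = relabel_measure_preserving[OF s G]
    have "(\<integral>\<^sup>+\<theta>. indicator B (relabel d G \<sigma> \<theta>) \<partial>?T) = (\<integral>\<^sup>+\<theta>. indicator B \<theta> \<partial>distr ?T ?T (relabel d G \<sigma>))"
      using rm(1) B by (subst nn_integral_distr) auto
    also have "\<dots> = emeasure ?T B" using rm(2) B by simp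
    finally have "(\<integral>\<^sup>+\<theta>. indicator B (relabel d G \<sigma> \<theta>) \<partial>?T) = ennreal ?V" using EV by simp
    moreover have "(\<lambda>\<theta>. indicator B (relabel d G \<sigma> \<theta>) :: ennreal) \<in> borel_measurable ?T"
      using measurable_compose[OF rm(1) borel_measurable_indicator[OF B]] by simp
    ultimately show ?thesis by (subst nn_integral_cmult) auto
  qed
  have "(\<integral>\<^sup>+\<theta>. ennreal (sym_density d G B \<theta>) \<partial>?T) = (\<Sum>\<sigma>\<in>?P. (\<integral>\<^sup>+\<theta>. ennreal c * indicator B (relabel d G \<sigma> \<theta>) \<partial>?T))"
    unfolding eq
  proof (rule nn_integral_sum)
    fix \<sigma> assume s: "\<sigma> \<in> ?P"
    show "(\<lambda>\<theta>. ennreal c * indicator B (relabel d G \<sigma> \<theta>)) \<in> borel_measurable ?T"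
      using measurable_compose[OF relabel_measure_preserving(1)[of \<sigma> G d] borel_measurable_indicator[OF B]] s G
      by (intro borel_measurable_times_ennreal borel_measurable_const) auto
  qed
  also have "\<dots> = (\<Sum>\<sigma>\<in>?P. ennreal c * ennreal ?V)" using each by (intro sum.cong) auto
  also have "\<dots> = ennreal (fact G * (c * ?V))"
    using c Vpos by (simp add: card_perms ennreal_mult ennreal_of_nat_eq_real_of_nat)
  also have "fact G * (c * ?V) = 1" using Vpos by (simp add: c_def)
  finally show ?thesis by simp
qed



locale iid_bnd = prob_space M for M :: "'w measure" +
  fixes \<Theta> :: "'b measure" and X :: "nat \<Rightarrow> 'w \<Rightarrow> 'b" and g :: "'b \<Rightarrow> real" and C :: real and D :: "'b measure"
  assumes indep: "indep_vars (\<lambda>_. \<Theta>) X UNIV"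
    and gm[measurable]: "g \<in> borel_measurable \<Theta>"
    and bnd: "\<And>\<theta>. \<theta> \<in> space \<Theta> \<Longrightarrow> 0 \<le> g \<theta> \<and> g \<theta> \<le> C"
    and Cpos: "C > 0"
    and idd: "\<And>t. distr M \<Theta> (X t) = D"
begin

definition "Y t \<omega> = g (X t \<omega>)"
definition "\<mu> = expectation (Y 0)"

lemma X_meas[measurable]: "X t \<in> measurable M \<Theta>"
  using indep unfolding indep_vars_def2 by auto

lemma Y_meas[measurable]: "Y t \<in> borel_measurable M"
  unfolding Y_def[abs_def] by measurable

lemma Y_bnd: "\<omega> \<in> space M \<Longrightarrow> 0 \<le> Y t \<omega> \<and> Y t \<omega> \<le> C"
  unfolding Y_def using bnd measurable_space[OF X_meas] by blast

lemma Y_indep: "indep_vars (\<lambda>_. borel) Y UNIV"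
  unfolding Y_def[abs_def] by (rule indep_vars_compose2[OF indep]) simp

lemma distr_comp: "f \<in> measurable \<Theta> N \<Longrightarrow> distr M N (\<lambda>\<omega>. f (X t \<omega>)) = distr M N (\<lambda>\<omega>. f (X 0 \<omega>))"
proof -
  assume f: "f \<in> measurable \<Theta> N"
  have "distr M N (\<lambda>\<omega>. f (X t \<omega>)) = distr (distr M \<Theta> (X t)) N f"
    using f by (subst distr_distr) (auto simp: comp_def)
  also have "\<dots> = distr (distr M \<Theta> (X 0)) N f" by (simp add: idd)
  also have "\<dots> = distr M N (\<lambda>\<omega>. f (X 0 \<omega>))"
    using f by (subst distr_distr) (auto simp: comp_def)
  finally show ?thesis .
qed

lemma Y_distr: "distr M borel (Y t) = distr M borel (Y 0)"
  unfolding Y_def[abs_def] by (rule distr_comp) simp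

lemma Y_int[simp]: "integrable M (Y t)"
  using Y_bnd by (intro integrable_const_bound[where B=C]) (auto simp: abs_le_iff intro!: AE_I2)

lemma Y_exp: "expectation (Y t) = \<mu>"
proof -
  have "expectation (Y t) = integral\<^sup>L (distr M borel (Y t)) (\<lambda>x. x)"
    by (simp add: integral_distr)
  also have "\<dots> = integral\<^sup>L (distr M borel (Y 0)) (\<lambda>x. x)" by (simp add: Y_distr[of t])
  also have "\<dots> = \<mu>" by (simp add: integral_distr \<mu>_def)
  finally show ?thesis .
qed

lemma hoeffding_window:
  assumes N: "N > 0" and e: "\<epsilon> \<ge> 0"
  shows "prob {\<omega> \<in> space M. \<bar>(\<Sum>t\<in>{N+1..2*N}. Y t \<omega>) / real N - \<mu>\<bar> \<ge> \<epsilon>}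
     \<le> 2 * exp (-2 * real N * \<epsilon>\<^sup>2 / C\<^sup>2)"
proof -
  interpret H: Hoeffding_ineq_iid M "{N+1..2*N}" Y "Y 0" 0 C \<mu>
  proof unfold_locales
    show "finite {N+1..2*N}" by simp
    show "indep_vars (\<lambda>_. borel) Y {N+1..2*N}" using Y_indep by (rule indep_vars_subset) auto
    show "distr M borel (Y i) = distr M borel (Y 0)" for i by (rule Y_distr)
    show "random_variable borel (Y 0)" by simp
    show "AE x in M. Y 0 x \<in> {0..C}" using Y_bnd by (intro AE_I2) auto
    show "\<mu> \<equiv> expectation (Y 0)" unfolding \<mu>_def by (rule reflexive)
  qed
  have "card {N+1..2*N} = N" by simp
  then show ?thesis
    using H.Hoeffding_ineq_abs_ge'[OF e Cpos] N by (simp add: \<mu>_def)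
qed

end



context iid_bnd begin

lemma slln_eps:
  assumes e: "\<epsilon> > 0"
  shows "AE \<omega> in M. eventually (\<lambda>N. \<bar>(\<Sum>t\<in>{N+1..2*N}. Y t \<omega>) / real N - \<mu>\<bar> < \<epsilon>) sequentially"
proof -
  define A where "A N = {\<omega> \<in> space M. \<bar>(\<Sum>t\<in>{N+1..2*N}. Y t \<omega>) / real N - \<mu>\<bar> \<ge> \<epsilon>}" for N
  have Am: "A N \<in> sets M" for N unfolding A_def by measurable
  define c where "c = exp (-2 * \<epsilon>\<^sup>2 / C\<^sup>2)"
  have c: "0 < c" "c < 1" using e Cpos by (auto simp: c_def)
  have "summable (\<lambda>N. 2 * c ^ N)" using c by (intro summable_mult summable_geometric) auto
  then have "summable (\<lambda>N. measure M (A N))"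
  proof (rule summable_comparison_test'[where N=1])
    fix N :: nat assume "N \<ge> 1"
    then have "measure M (A N) \<le> 2 * exp (-2 * real N * \<epsilon>\<^sup>2 / C\<^sup>2)"
      unfolding A_def using hoeffding_window[of N \<epsilon>] e by simp
    also have "exp (-2 * real N * \<epsilon>\<^sup>2 / C\<^sup>2) = c ^ N"
      unfolding c_def by (subst exp_of_nat_mult[symmetric]) (simp add: field_simps)
    finally show "norm (measure M (A N)) \<le> 2 * c ^ N" by simp
  qed
  from borel_cantelli_AE1[OF Am _ this] have "AE \<omega> in M. eventually (\<lambda>N. \<omega> \<in> space M - A N) sequentially"
    by (simp add: emeasure_eq_measure)
  then show ?thesis
    by (rule eventually_mono) (auto simp: A_def elim!: eventually_mono)
qed

lemma slln_window:
  "AE \<omega> in M. (\<lambda>N. (\<Sum>t\<in>{N+1..2*N}. Y t \<omega>) / real N) \<longlonglongrightarrow> \<mu>"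
proof -
  have "AE \<omega> in M. \<forall>k::nat. eventually (\<lambda>N. \<bar>(\<Sum>t\<in>{N+1..2*N}. Y t \<omega>) / real N - \<mu>\<bar> < 1 / Suc k) sequentially"
  proof (subst AE_all_countable, intro allI)
    fix k :: nat
    show "AE \<omega> in M. eventually (\<lambda>N. \<bar>(\<Sum>t\<in>{N+1..2*N}. Y t \<omega>) / real N - \<mu>\<bar> < 1 / Suc k) sequentially"
      by (rule slln_eps) simp
  qed
  then show ?thesis
  proof (rule eventually_mono)
    fix \<omega> assume H: "\<forall>k::nat. eventually (\<lambda>N. \<bar>(\<Sum>t\<in>{N+1..2*N}. Y t \<omega>) / real N - \<mu>\<bar> < 1 / Suc k) sequentially"
    show "(\<lambda>N. (\<Sum>t\<in>{N+1..2*N}. Y t \<omega>) / real N) \<longlonglongrightarrow> \<mu>"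
    proof (rule tendstoI)
      fix e :: real assume "e > 0"
      then obtain k where k: "inverse (real (Suc k)) < e" using reals_Archimedean by blast
      show "eventually (\<lambda>N. dist ((\<Sum>t\<in>{N+1..2*N}. Y t \<omega>) / real N) \<mu> < e) sequentially"
        using H[rule_format, of k] by (rule eventually_mono) (use k in \<open>auto simp: dist_real_def inverse_eq_divide\<close>)
    qed
  qed
qed

end



lemma (in prob_space) char_distr_eq:
  assumes [measurable]: "f \<in> borel_measurable M"
  shows "char (distr M borel f) t = (CLINT \<omega>|M. iexp (t * f \<omega>))"
  by (simp add: char_def integral_distr)

context iid_bnd begin

definition "V N \<omega> = sqrt (real N) * ((\<Sum>t\<in>{N+1..2*N}. Y t \<omega>) / real N - \<mu>)"
definition "\<psi> N t = char (distr M borel (\<lambda>\<omega>. (Y 0 \<omega> - \<mu>) / sqrt (real N))) t"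

lemma V_eq: "V N \<omega> = (\<Sum>i\<in>{N+1..2*N}. (Y i \<omega> - \<mu>) / sqrt (real N))"
proof (cases "N = 0")
  case True then show ?thesis by (simp add: V_def)
next
  case False
  have sq: "sqrt (real N) * sqrt (real N) = real N" by simp
  have k: "sqrt (real N) * (x / real N) = x / sqrt (real N)" for x
  proof -
    have "sqrt (real N) * (x / real N) = sqrt (real N) * x / (sqrt (real N) * sqrt (real N))" by (simp add: sq)
    also have "\<dots> = x / sqrt (real N)" by (rule mult_divide_mult_cancel_left) (use False in simp)
    finally show ?thesis .
  qed
  have "V N \<omega> = sqrt (real N) * (((\<Sum>i\<in>{N+1..2*N}. Y i \<omega>) - real N * \<mu>) / real N)"
    using False by (simp add: V_def diff_divide_distrib)
  also have "\<dots> = ((\<Sum>i\<in>{N+1..2*N}. Y i \<omega>) - real N * \<mu>) / sqrt (real N)" by (rule k)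
  also have "(\<Sum>i\<in>{N+1..2*N}. Y i \<omega>) - real N * \<mu> = (\<Sum>i\<in>{N+1..2*N}. (Y i \<omega> - \<mu>))"
    by (simp add: sum_subtractf)
  finally show ?thesis by (simp add: sum_divide_distrib)
qed

lemma V_meas[measurable]: "V N \<in> borel_measurable M"
  unfolding V_def by measurable

lemma char_V: "char (distr M borel (V N)) t = (\<psi> N t) ^ N"
proof -
  have ind: "indep_vars (\<lambda>_. borel) (\<lambda>i \<omega>. (Y i \<omega> - \<mu>) / sqrt (real N)) {N+1..2*N}"
    by (rule indep_vars_subset[OF indep_vars_compose2[OF Y_indep]]) auto
  have "char (distr M borel (V N)) t = char (distr M borel (\<lambda>\<omega>. \<Sum>i\<in>{N+1..2*N}. (Y i \<omega> - \<mu>) / sqrt (real N))) t"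
    by (simp add: V_eq[abs_def])
  also have "\<dots> = (\<Prod>i\<in>{N+1..2*N}. char (distr M borel (\<lambda>\<omega>. (Y i \<omega> - \<mu>) / sqrt (real N))) t)"
    by (rule char_distr_sum[OF ind])
  also have "\<dots> = (\<Prod>i\<in>{N+1..2*N}. \<psi> N t)"
  proof (intro prod.cong refl)
    fix i
    have "distr M borel (\<lambda>\<omega>. (Y i \<omega> - \<mu>) / sqrt (real N)) = distr M borel (\<lambda>\<omega>. (Y 0 \<omega> - \<mu>) / sqrt (real N))"
      unfolding Y_def by (rule distr_comp) simp
    then show "char (distr M borel (\<lambda>\<omega>. (Y i \<omega> - \<mu>) / sqrt (real N))) t = \<psi> N t" by (simp add: \<psi>_def)
  qed
  also have "\<dots> = (\<psi> N t) ^ N" by simp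
  finally show ?thesis .
qed

definition "s = sqrt (variance (Y 0))"

lemma var_nonneg: "variance (Y 0) \<ge> 0" by (rule integral_nonneg_AE) auto

lemma Y_sq_int: "integrable M (\<lambda>\<omega>. (Y t \<omega>)\<^sup>2)"
  using Y_bnd by (intro integrable_const_bound[where B="C\<^sup>2"]) (auto simp: abs_le_iff intro!: AE_I2 power_mono)

lemma char_V_lim: "(\<lambda>N. char (distr M borel (V N)) t) \<longlonglongrightarrow> complex_of_real (exp (- ((s * t)\<^sup>2) / 2))"
proof (cases "variance (Y 0) = 0")
  case True
  have bd: "norm ((Y 0 \<omega> - \<mu>)\<^sup>2) \<le> (C + \<bar>\<mu>\<bar>)\<^sup>2" if "\<omega> \<in> space M" for \<omega>
  proof -
    have "\<bar>Y 0 \<omega> - \<mu>\<bar> \<le> C + \<bar>\<mu>\<bar>" using Y_bnd[OF that, of 0] by linarith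
    then have "\<bar>Y 0 \<omega> - \<mu>\<bar>\<^sup>2 \<le> (C + \<bar>\<mu>\<bar>)\<^sup>2" by (rule power_mono) simp
    then show ?thesis by simp
  qed
  have ib: "integrable M (\<lambda>\<omega>. (Y 0 \<omega> - \<mu>)\<^sup>2)"
    using bd by (intro integrable_const_bound[where B="(C + \<bar>\<mu>\<bar>)\<^sup>2"] AE_I2) auto
  have "AE \<omega> in M. (Y 0 \<omega> - \<mu>)\<^sup>2 = 0"
    using True ib by (subst integral_nonneg_eq_0_iff_AE[symmetric]) (auto simp: \<mu>_def)
  then have AE0: "AE \<omega> in M. Y 0 \<omega> = \<mu>" by (auto elim!: eventually_mono)
  have "\<psi> N t = 1" for N
  proof -
    have "\<psi> N t = (CLINT \<omega>|M. iexp (t * ((Y 0 \<omega> - \<mu>) / sqrt (real N))))"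
      unfolding \<psi>_def by (rule char_distr_eq) simp
    also have "\<dots> = (CLINT \<omega>|M. 1)"
      by (rule integral_cong_AE) (use AE0 in \<open>auto elim!: eventually_mono\<close>)
    also have "\<dots> = 1" by (simp add: prob_space)
    finally show ?thesis .
  qed
  then show ?thesis using True by (simp add: char_V s_def)
next
  case False
  then have vpos: "variance (Y 0) > 0" using var_nonneg by (metis less_eq_real_def)
  then have spos: "s > 0" by (simp add: s_def)
  have s2: "s\<^sup>2 = variance (Y 0)" using var_nonneg by (simp add: s_def)
  have var_eq: "variance (Y n) = s\<^sup>2" for n
  proof -
    have "distr M borel (\<lambda>\<omega>. (g (X n \<omega>) - \<mu>)\<^sup>2) = distr M borel (\<lambda>\<omega>. (g (X 0 \<omega>) - \<mu>)\<^sup>2)"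
      by (rule distr_comp) simp
    then have "integral\<^sup>L (distr M borel (\<lambda>\<omega>. (Y n \<omega> - \<mu>)\<^sup>2)) (\<lambda>x. x) = integral\<^sup>L (distr M borel (\<lambda>\<omega>. (Y 0 \<omega> - \<mu>)\<^sup>2)) (\<lambda>x. x)"
      by (simp add: Y_def[abs_def])
    then show ?thesis by (simp add: integral_distr Y_exp s2 \<mu>_def[symmetric])
  qed
  have clt: "weak_conv_m (\<lambda>n. distr M borel (\<lambda>x. (\<Sum>i<n. Y i x - \<mu>) / sqrt (n * s\<^sup>2))) std_normal_distribution"
    using central_limit_theorem[OF Y_indep Y_exp spos Y_sq_int var_eq Y_distr] by simp
  have lim: "(\<lambda>n. char (distr M borel (\<lambda>x. (\<Sum>i<n. Y i x - \<mu>) / sqrt (n * s\<^sup>2))) (s * t)) \<longlonglongrightarrow> char std_normal_distribution (s * t)"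
    by (rule levy_continuity1[OF _ real_dist_normal_dist clt]) simp
  have eq: "char (distr M borel (\<lambda>x. (\<Sum>i<n. Y i x - \<mu>) / sqrt (n * s\<^sup>2))) (s * t) = char (distr M borel (V n)) t" for n
  proof -
    have ind: "indep_vars (\<lambda>_. borel) (\<lambda>i \<omega>. (Y i \<omega> - \<mu>) / sqrt (n * s\<^sup>2)) {..<n}"
      by (rule indep_vars_subset[OF indep_vars_compose2[OF Y_indep]]) auto
    have "char (distr M borel (\<lambda>x. (\<Sum>i<n. Y i x - \<mu>) / sqrt (n * s\<^sup>2))) (s * t)
        = char (distr M borel (\<lambda>x. (\<Sum>i<n. (Y i x - \<mu>) / sqrt (n * s\<^sup>2)))) (s * t)"
      by (simp add: sum_divide_distrib)
    also have "\<dots> = (\<Prod>i<n. char (distr M borel (\<lambda>\<omega>. (Y i \<omega> - \<mu>) / sqrt (n * s\<^sup>2))) (s * t))"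
      by (rule char_distr_sum[OF ind])
    also have "\<dots> = (\<Prod>i<n. \<psi> n t)"
    proof (intro prod.cong refl)
      fix i
      have "distr M borel (\<lambda>\<omega>. (Y i \<omega> - \<mu>) / sqrt (n * s\<^sup>2)) = distr M borel (\<lambda>\<omega>. (Y 0 \<omega> - \<mu>) / sqrt (n * s\<^sup>2))"
        unfolding Y_def by (rule distr_comp) simp
      moreover have "char (distr M borel (\<lambda>\<omega>. (Y 0 \<omega> - \<mu>) / sqrt (n * s\<^sup>2))) (s * t) = \<psi> n t"
      proof -
        have "s * t * ((Y 0 \<omega> - \<mu>) / sqrt (n * s\<^sup>2)) = t * ((Y 0 \<omega> - \<mu>) / sqrt (real n))" for \<omega>
          using spos by (simp add: real_sqrt_mult)
        then show ?thesis unfolding \<psi>_def by (simp add: char_distr_eq)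
      qed
      ultimately show "char (distr M borel (\<lambda>\<omega>. (Y i \<omega> - \<mu>) / sqrt (n * s\<^sup>2))) (s * t) = \<psi> n t" by simp
    qed
    also have "\<dots> = char (distr M borel (V n)) t" by (simp add: char_V)
    finally show ?thesis .
  qed
  show ?thesis using lim unfolding eq char_std_normal_distribution by (simp add: power_mult_distrib)
qed

end



lemma centred_normal_props:
  assumes s: "s \<ge> 0"
  shows "real_distribution (centred_normal s)"
    and "char (centred_normal s) t = complex_of_real (exp (- ((s * t)\<^sup>2) / 2))"
proof -
  have "real_distribution (centred_normal s) \<and> char (centred_normal s) t = complex_of_real (exp (- ((s * t)\<^sup>2) / 2))"
  proof (cases "s = 0")
    case True
    have rd: "real_distribution (return borel (0::real))"
      unfolding real_distribution_def real_distribution_axioms_def by (auto intro!: prob_space_return)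
    have "char (return borel (0::real)) t = 1"
      unfolding char_def by (subst integral_return) auto
    then show ?thesis using True rd by (simp add: centred_normal_def)
  next
    case False
    then have sp: "s > 0" using s by simp
    interpret std: prob_space std_normal_distribution
      using real_dist_normal_dist by (simp add: real_distribution_def)
    have "distributed std_normal_distribution lborel (\<lambda>x. x) std_normal_density"
      unfolding distributed_def by (auto simp: distr_id2)
    from std.normal_density_affine[OF this, where \<alpha> = s and \<beta> = 0] sp
    have "distributed std_normal_distribution lborel (\<lambda>x. s * x) (normal_density 0 s)" by simp
    then have D: "distr std_normal_distribution lborel (\<lambda>x. s * x) = centred_normal s"
      using sp by (simp add: distributed_def centred_normal_def)
    have rd: "real_distribution (centred_normal s)"
      using prob_space_normal_density[OF sp, of 0] sp
      unfolding real_distribution_def real_distribution_axioms_def centred_normal_def by simp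
    have "char (centred_normal s) t = (CLINT x|std_normal_distribution. iexp (t * (s * x)))"
      unfolding D[symmetric] char_def by (subst integral_distr) auto
    also have "\<dots> = char std_normal_distribution (s * t)"
      unfolding char_def by (simp add: mult_ac)
    also have "\<dots> = complex_of_real (exp (- ((s * t)\<^sup>2) / 2))"
      by (simp add: char_std_normal_distribution)
    finally show ?thesis using rd by simp
  qed
  then show "real_distribution (centred_normal s)"
    and "char (centred_normal s) t = complex_of_real (exp (- ((s * t)\<^sup>2) / 2))" by auto
qed

context iid_bnd begin

lemma s_nonneg: "s \<ge> 0" by (simp add: s_def)

lemma clt_window: "weak_conv_m (\<lambda>N. distr M borel (V N)) (centred_normal s)"
proof (rule levy_continuity)
  show "real_distribution (distr M borel (V n))" for n by simp
  show "real_distribution (centred_normal s)" by (rule centred_normal_props(1)[OF s_nonneg])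
  show "(\<lambda>n. char (distr M borel (V n)) t) \<longlonglongrightarrow> char (centred_normal s) t" for t
    using char_V_lim[of t] by (simp add: centred_normal_props(2)[OF s_nonneg])
qed

end



lemma aux_cancel: "(p::real) > 0 \<Longrightarrow> p / z * (h / p) = h / z"
  by (simp add: field_simps)

theorem mainTheorem4:
  fixes d G n :: nat
    and f :: "'y \<Rightarrow> (nat \<Rightarrow> real) \<Rightarrow> real" and Y :: "nat \<Rightarrow> 'y"
    and prior :: "(nat \<Rightarrow> real) \<Rightarrow> real"
    and Z q :: real and B :: "(nat \<Rightarrow> real) set"
    and M :: "'w measure" and X :: "nat \<Rightarrow> 'w \<Rightarrow> (nat \<Rightarrow> real)"
    and \<sigma>s :: "nat \<Rightarrow> nat \<Rightarrow> 'w \<Rightarrow> (nat \<Rightarrow> nat)"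
  defines "L \<equiv> mix_lik d G f Y n"
    and "\<Theta> \<equiv> param_space d G"
  assumes G: "G \<ge> 1"
    and prior_nonneg: "\<forall>\<theta>\<in>space \<Theta>. 0 \<le> prior \<theta>"
    and post_nonneg: "\<forall>\<theta>\<in>space \<Theta>. 0 \<le> prior \<theta> * L \<theta>"
    and post_meas: "(\<lambda>\<theta>. prior \<theta> * L \<theta>) \<in> borel_measurable \<Theta>"
    and invariant: "\<forall>\<sigma>. \<sigma> permutes {..<G} \<longrightarrow>
        (\<forall>\<theta>\<in>space \<Theta>. prior (relabel d G \<sigma> \<theta>) * L (relabel d G \<sigma> \<theta>) = prior \<theta> * L \<theta>)"
    and Z_int: "integrable \<Theta> (\<lambda>\<theta>. prior \<theta> * L \<theta>)"
    and Z_def: "Z = (\<integral>\<theta>. prior \<theta> * L \<theta> \<partial>\<Theta>)"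
    and Z_pos: "0 < Z"
    and B_meas: "B \<in> sets \<Theta>"
    and B_pos: "0 < emeasure \<Theta> B" and B_fin: "emeasure \<Theta> B < \<infinity>"
    and q_pos: "0 < q"
    and B_q: "\<forall>\<theta>\<in>B. prior \<theta> * L \<theta> > q"
    and M: "prob_space M"
    and indep: "prob_space.indep_vars M (\<lambda>_. \<Theta>) X UNIV"
    and post: "\<forall>t. distr M \<Theta> (X t) = density \<Theta> (\<lambda>\<theta>. ennreal (prior \<theta> * L \<theta> / Z))"
    and perm: "\<forall>T t \<omega>. \<sigma>s T t \<omega> permutes {..<G}"
  shows
    "(\<forall>T. even T \<longrightarrow> 0 < T \<longrightarrow> (\<forall>\<omega>\<in>space M.
        thames_sym d G B (\<lambda>\<theta>. prior \<theta> * L \<theta>) T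
          (\<lambda>t. relabel d G (\<sigma>s T t \<omega>) (X t \<omega>))
        = (1 / (real T / 2)) * (\<Sum>t\<in>{T div 2 + 1..T}.
             sym_density d G B (X t \<omega>) / (prior (X t \<omega>) * L (X t \<omega>)))))
     \<and> sym_density d G B \<in> borel_measurable \<Theta>
     \<and> (\<forall>\<theta>\<in>space \<Theta>. 0 \<le> sym_density d G B \<theta>)
     \<and> (\<integral>\<^sup>+\<theta>. ennreal (sym_density d G B \<theta>) \<partial>\<Theta>) = 1
     \<and> (\<forall>T. even T \<longrightarrow> 0 < T \<longrightarrow>
          (let est = (\<lambda>\<omega>. thames_sym d G B (\<lambda>\<theta>. prior \<theta> * L \<theta>) T
                              (\<lambda>t. relabel d G (\<sigma>s T t \<omega>) (X t \<omega>)))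
           in integrable M est \<and> integrable M (\<lambda>\<omega>. (est \<omega>)\<^sup>2)
              \<and> (\<integral>\<omega>. est \<omega> \<partial>M) = 1 / Z))
     \<and> (AE \<omega> in M. (\<lambda>N. thames_sym d G B (\<lambda>\<theta>. prior \<theta> * L \<theta>) (2 * N)
                          (\<lambda>t. relabel d G (\<sigma>s (2 * N) t \<omega>) (X t \<omega>))) \<longlonglongrightarrow> 1 / Z)
     \<and> (\<exists>s\<ge>0. weak_conv_m
          (\<lambda>N. distr M borel (\<lambda>\<omega>. sqrt (real (2 * N) / 2) *
             (thames_sym d G B (\<lambda>\<theta>. prior \<theta> * L \<theta>) (2 * N)
                (\<lambda>t. relabel d G (\<sigma>s (2 * N) t \<omega>) (X t \<omega>)) - 1 / Z)))
          (centred_normal s))"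
proof -
  interpret P: prob_space M by (rule M)
  define V where "V = measure \<Theta> B"
  have EV: "emeasure \<Theta> B = ennreal V" using B_fin by (simp add: V_def emeasure_eq_ennreal_measure)
  have Vpos: "V > 0" using B_pos EV by simp
  define g where "g \<theta> = sym_density d G B \<theta> / (prior \<theta> * L \<theta>)" for \<theta>
  define C where "C = 1 / (V * q)"
  have Cpos: "C > 0" using Vpos q_pos by (simp add: C_def)
  have inv': "\<And>\<sigma> \<theta>. \<sigma> permutes {..<G} \<Longrightarrow> \<theta> \<in> space (param_space d G) \<Longrightarrow>
      prior (relabel d G \<sigma> \<theta>) * L (relabel d G \<sigma> \<theta>) = prior \<theta> * L \<theta>"
    using invariant unfolding \<Theta>_def by blast
  have hpos: "prior \<theta> * L \<theta> > q" if th: "\<theta> \<in> space \<Theta>" and h: "sym_density d G B \<theta> \<noteq> 0" for \<theta>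
  proof -
    obtain \<sigma> where s: "\<sigma> permutes {..<G}" "relabel d G \<sigma> \<theta> \<in> B" using sym_density_pos[OF h] by blast
    then have "q < prior (relabel d G \<sigma> \<theta>) * L (relabel d G \<sigma> \<theta>)" using B_q by blast
    also have "\<dots> = prior \<theta> * L \<theta>" using inv'[OF s(1)] th by (simp add: \<Theta>_def)
    finally show ?thesis .
  qed
  have gb: "0 \<le> g \<theta> \<and> g \<theta> \<le> C" if th: "\<theta> \<in> space \<Theta>" for \<theta>
  proof (cases "sym_density d G B \<theta> = 0")
    case True then show ?thesis using Cpos by (simp add: g_def)
  next
    case False
    have pq: "prior \<theta> * L \<theta> > q" by (rule hpos[OF th False])
    have "g \<theta> \<le> (1 / V) / q" unfolding g_def
      using sym_density_le[of d G B \<theta>] pq q_pos sym_density_nonneg[of d G B \<theta>]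
      by (intro frac_le) (auto simp: V_def \<Theta>_def)
    moreover have "0 \<le> g \<theta>" unfolding g_def using pq q_pos sym_density_nonneg[of d G B \<theta>] by simp
    ultimately show ?thesis by (simp add: C_def)
  qed
  have hm: "sym_density d G B \<in> borel_measurable \<Theta>"
    unfolding \<Theta>_def by (rule sym_density_meas[OF G B_meas[unfolded \<Theta>_def]])
  have gm: "g \<in> borel_measurable \<Theta>"
    unfolding g_def[abs_def] using hm post_meas by (rule borel_measurable_divide)
  have hint: "(\<integral>\<^sup>+\<theta>. ennreal (sym_density d G B \<theta>) \<partial>\<Theta>) = 1"
    unfolding \<Theta>_def using sym_density_integral[OF G B_meas[unfolded \<Theta>_def] B_pos[unfolded \<Theta>_def] B_fin[unfolded \<Theta>_def]] .
  interpret I: iid_bnd M \<Theta> X g C "density \<Theta> (\<lambda>\<theta>. ennreal (prior \<theta> * L \<theta> / Z))"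
    by unfold_locales (use indep gm gb Cpos post in auto)
  have Xsp: "\<omega> \<in> space M \<Longrightarrow> X t \<omega> \<in> space \<Theta>" for t \<omega> using measurable_space[OF I.X_meas] .
  have mu: "I.\<mu> = 1 / Z"
  proof -
    have "I.\<mu> = integral\<^sup>L (distr M \<Theta> (X 0)) g"
      unfolding I.\<mu>_def I.Y_def using gm by (subst integral_distr) auto
    also have "\<dots> = integral\<^sup>L (density \<Theta> (\<lambda>\<theta>. ennreal (prior \<theta> * L \<theta> / Z))) g" using post by simp
    also have "\<dots> = integral\<^sup>L \<Theta> (\<lambda>\<theta>. (prior \<theta> * L \<theta> / Z) *\<^sub>R g \<theta>)"
      using gm post_meas post_nonneg Z_pos by (subst integral_density) (auto intro!: AE_I2)
    also have "\<dots> = integral\<^sup>L \<Theta> (\<lambda>\<theta>. sym_density d G B \<theta> / Z)"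
    proof (rule Bochner_Integration.integral_cong[OF refl])
      fix \<theta> assume th: "\<theta> \<in> space \<Theta>"
      show "(prior \<theta> * L \<theta> / Z) *\<^sub>R g \<theta> = sym_density d G B \<theta> / Z"
      proof (cases "sym_density d G B \<theta> = 0")
        case True then show ?thesis by (simp add: g_def)
      next
        case False
        then have "prior \<theta> * L \<theta> > 0" using hpos[OF th False] q_pos by linarith
        then show ?thesis unfolding g_def real_scaleR_def by (rule aux_cancel)
      qed
    qed
    also have "\<dots> = integral\<^sup>L \<Theta> (sym_density d G B) / Z" by simp
    also have "integral\<^sup>L \<Theta> (sym_density d G B) = 1"
      using hm hint sym_density_nonneg by (subst integral_eq_nn_integral) auto
    finally show ?thesis by simp
  qed
  have ident: "thames_sym d G B (\<lambda>\<theta>. prior \<theta> * L \<theta>) T (\<lambda>t. relabel d G (\<sigma>s T t \<omega>) (X t \<omega>))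
      = (1 / (real T / 2)) * (\<Sum>t\<in>{T div 2 + 1..T}. sym_density d G B (X t \<omega>) / (prior (X t \<omega>) * L (X t \<omega>)))"
    if \<omega>: "\<omega> \<in> space M" for T \<omega>
    by (rule thames_identity[OF G inv']) (use Xsp[OF \<omega>] perm in \<open>auto simp: \<Theta>_def\<close>)
  have ident2: "thames_sym d G B (\<lambda>\<theta>. prior \<theta> * L \<theta>) T (\<lambda>t. relabel d G (\<sigma>s T t \<omega>) (X t \<omega>))
      = (1 / (real T / 2)) * (\<Sum>t\<in>{T div 2 + 1..T}. I.Y t \<omega>)"
    if \<omega>: "\<omega> \<in> space M" for T \<omega>
    using ident[OF \<omega>] by (simp add: I.Y_def g_def)
  have P1: "\<forall>T. even T \<longrightarrow> 0 < T \<longrightarrow> (\<forall>\<omega>\<in>space M.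
        thames_sym d G B (\<lambda>\<theta>. prior \<theta> * L \<theta>) T
          (\<lambda>t. relabel d G (\<sigma>s T t \<omega>) (X t \<omega>))
        = (1 / (real T / 2)) * (\<Sum>t\<in>{T div 2 + 1..T}.
             sym_density d G B (X t \<omega>) / (prior (X t \<omega>) * L (X t \<omega>))))"
    using ident by blast
  have card: "real (card {T div 2 + 1..T}) = real T / 2" if "even T" for T :: nat
    using that by (auto elim!: evenE)
  have P5: "\<forall>T. even T \<longrightarrow> 0 < T \<longrightarrow>
          (let est = (\<lambda>\<omega>. thames_sym d G B (\<lambda>\<theta>. prior \<theta> * L \<theta>) T
                              (\<lambda>t. relabel d G (\<sigma>s T t \<omega>) (X t \<omega>)))
           in integrable M est \<and> integrable M (\<lambda>\<omega>. (est \<omega>)\<^sup>2)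
              \<and> (\<integral>\<omega>. est \<omega> \<partial>M) = 1 / Z)"
  proof (intro allI impI)
    fix T :: nat assume ev: "even T" and Tpos: "0 < T"
    define est where "est = (\<lambda>\<omega>. thames_sym d G B (\<lambda>\<theta>. prior \<theta> * L \<theta>) T
                              (\<lambda>t. relabel d G (\<sigma>s T t \<omega>) (X t \<omega>)))"
    define est' where "est' = (\<lambda>\<omega>. (1 / (real T / 2)) * (\<Sum>t\<in>{T div 2 + 1..T}. I.Y t \<omega>))"
    have eq: "\<omega> \<in> space M \<Longrightarrow> est \<omega> = est' \<omega>" for \<omega> unfolding est_def est'_def by (rule ident2)
    have i1: "integrable M est'" unfolding est'_def by simp
    have bd: "0 \<le> est' \<omega> \<and> est' \<omega> \<le> C" if \<omega>: "\<omega> \<in> space M" for \<omega>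
    proof -
      have "(\<Sum>t\<in>{T div 2 + 1..T}. I.Y t \<omega>) \<le> of_nat (card {T div 2 + 1..T}) * C"
        using I.Y_bnd[OF \<omega>] by (intro sum_bounded_above) auto
      also have "\<dots> = real T / 2 * C" using card[OF ev] by simp
      finally have u: "(\<Sum>t\<in>{T div 2 + 1..T}. I.Y t \<omega>) \<le> real T / 2 * C" .
      have l: "0 \<le> (\<Sum>t\<in>{T div 2 + 1..T}. I.Y t \<omega>)" using I.Y_bnd[OF \<omega>] by (intro sum_nonneg) auto
      show ?thesis using u l Tpos by (auto simp: est'_def field_simps)
    qed
    have i2: "integrable M (\<lambda>\<omega>. (est' \<omega>)\<^sup>2)"
    proof -
      have a: "AE x in M. norm ((est' x)\<^sup>2) \<le> C\<^sup>2"
        using bd by (intro AE_I2) (auto intro!: power_mono)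
      have m: "(\<lambda>\<omega>. (est' \<omega>)\<^sup>2) \<in> borel_measurable M" unfolding est'_def by measurable
      from a m show ?thesis by (rule P.integrable_const_bound)
    qed
    have "(\<integral>\<omega>. est' \<omega> \<partial>M) = (1 / (real T / 2)) * (\<Sum>t\<in>{T div 2 + 1..T}. I.\<mu>)"
      unfolding est'_def by (simp add: I.Y_exp)
    also have "\<dots> = I.\<mu>" using card[OF ev] Tpos by simp
    finally have i3: "(\<integral>\<omega>. est' \<omega> \<partial>M) = 1 / Z" using mu by simp
    have "integrable M est \<and> integrable M (\<lambda>\<omega>. (est \<omega>)\<^sup>2) \<and> (\<integral>\<omega>. est \<omega> \<partial>M) = 1 / Z"
      using i1 i2 i3 Bochner_Integration.integrable_cong[OF refl, of M est est'] Bochner_Integration.integrable_cong[OF refl, of M "\<lambda>\<omega>. (est \<omega>)\<^sup>2" "\<lambda>\<omega>. (est' \<omega>)\<^sup>2"]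
        Bochner_Integration.integral_cong[OF refl, of M est est'] eq by simp
    then show "let est = (\<lambda>\<omega>. thames_sym d G B (\<lambda>\<theta>. prior \<theta> * L \<theta>) T
                              (\<lambda>t. relabel d G (\<sigma>s T t \<omega>) (X t \<omega>)))
           in integrable M est \<and> integrable M (\<lambda>\<omega>. (est \<omega>)\<^sup>2)
              \<and> (\<integral>\<omega>. est \<omega> \<partial>M) = 1 / Z" unfolding est_def Let_def .
  qed
  have eqN: "thames_sym d G B (\<lambda>\<theta>. prior \<theta> * L \<theta>) (2 * N) (\<lambda>t. relabel d G (\<sigma>s (2 * N) t \<omega>) (X t \<omega>))
      = (\<Sum>t\<in>{N+1..2*N}. I.Y t \<omega>) / real N" if \<omega>: "\<omega> \<in> space M" for N \<omega>
    using ident2[OF \<omega>, of "2 * N"] by simp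
  have P6: "AE \<omega> in M. (\<lambda>N. thames_sym d G B (\<lambda>\<theta>. prior \<theta> * L \<theta>) (2 * N)
                          (\<lambda>t. relabel d G (\<sigma>s (2 * N) t \<omega>) (X t \<omega>))) \<longlonglongrightarrow> 1 / Z"
    by (rule AE_mp[OF I.slln_window AE_I2]) (simp add: eqN mu)
  have P7: "\<exists>s\<ge>0. weak_conv_m
          (\<lambda>N. distr M borel (\<lambda>\<omega>. sqrt (real (2 * N) / 2) *
             (thames_sym d G B (\<lambda>\<theta>. prior \<theta> * L \<theta>) (2 * N)
                (\<lambda>t. relabel d G (\<sigma>s (2 * N) t \<omega>) (X t \<omega>)) - 1 / Z)))
          (centred_normal s)"
  proof (intro exI conjI)
    show "I.s \<ge> 0" by (rule I.s_nonneg)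
    have "distr M borel (\<lambda>\<omega>. sqrt (real (2 * N) / 2) *
             (thames_sym d G B (\<lambda>\<theta>. prior \<theta> * L \<theta>) (2 * N)
                (\<lambda>t. relabel d G (\<sigma>s (2 * N) t \<omega>) (X t \<omega>)) - 1 / Z)) = distr M borel (I.V N)" for N
      by (rule distr_cong) (auto simp: eqN I.V_def mu)
    then show "weak_conv_m
          (\<lambda>N. distr M borel (\<lambda>\<omega>. sqrt (real (2 * N) / 2) *
             (thames_sym d G B (\<lambda>\<theta>. prior \<theta> * L \<theta>) (2 * N)
                (\<lambda>t. relabel d G (\<sigma>s (2 * N) t \<omega>) (X t \<omega>)) - 1 / Z)))
          (centred_normal I.s)" using I.clt_window by simp
  qed
  have P3: "\<forall>\<theta>\<in>space \<Theta>. 0 \<le> sym_density d G B \<theta>" using sym_density_nonneg by blast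
  show ?thesis by (intro conjI P1 hm P3 hint P5 P6 P7)
qed


end
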